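(* Let $\rho$ and $\sigma$ be Hermitian matrices acting on the same finite-dimensional complex Hilbert space such that $\operatorname{tr}(\rho^{2})\le 1$ and $\operatorname{tr}(\sigma^{2})\le 1$, with $\max[\operatorname{tr}(\rho^2),\operatorname{tr}(\sigma^2)]>0$. Then $$\frac{\operatorname{tr}(\rho\sigma)}{\max[\operatorname{tr}(\rho^{2}),\operatorname{tr}(\sigma^{2})]}\;\le\;\operatorname{tr}(\rho\sigma)+\sqrt{1-\operatorname{tr}(\rho^{2})}\,\sqrt{1-\operatorname{tr}(\sigma^{2})}.$$ That is, $\mathcal{F}_2(\rho,\sigma)\le\mathcal{F}_{N}(\rho,\sigma)$.
   Context: The Hilbert–Schmidt fidelity is $\mathcal{F}_2(\rho,\sigma)=\operatorname{tr}(\rho\sigma)/\max[\operatorname{tr}(\rho^2),\operatorname{tr}(\sigma^2)]$ (defined when the denominator is nonzero), and the super-fidelity is $\mathcal{F}_N(\rho,\sigma)=\operatorname{tr}(\rho\sigma)+\sqrt{1-\operatorname{tr}(\rho^2)}\sqrt{1-\operatorname{tr}(\sigma^2)}$. *)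

theory Defs
  imports "HOL-Analysis.Analysis"
begin

definition hermitian_mat :: "complex^'n^'n \<Rightarrow> bool" where
  "hermitian_mat A \<longleftrightarrow> (\<forall>i j. A $ i $ j = cnj (A $ j $ i))"

end

theory Submission
  imports Defs
begin

lemma tr_eq:
  fixes \<rho> \<sigma> :: "complex^'n^'n"
  assumes "hermitian_mat \<sigma>"
  shows "Re (trace (\<rho> ** \<sigma>)) = (\<Sum>i\<in>UNIV. \<Sum>k\<in>UNIV. Re (\<rho>$i$k * cnj (\<sigma>$i$k)))"
proof -
  have h: "\<sigma>$k$i = cnj (\<sigma>$i$k)" for i k
    using assms unfolding hermitian_mat_def by blast
  have "trace (\<rho> ** \<sigma>) = (\<Sum>i\<in>UNIV. \<Sum>k\<in>UNIV. \<rho>$i$k * \<sigma>$k$i)"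
    unfolding trace_def matrix_matrix_mult_def by simp
  also have "\<dots> = (\<Sum>i\<in>UNIV. \<Sum>k\<in>UNIV. \<rho>$i$k * cnj (\<sigma>$i$k))"
  proof (intro sum.cong refl)
    fix i k
    show "\<rho>$i$k * \<sigma>$k$i = \<rho>$i$k * cnj (\<sigma>$i$k)" by (simp only: h[of k i])
  qed
  finally show ?thesis by (simp add: Re_sum)
qed

lemma sum_pairs:
  fixes g :: "'a::finite \<Rightarrow> 'b::finite \<Rightarrow> real"
  shows "(\<Sum>i\<in>UNIV. \<Sum>k\<in>UNIV. g i k) = (\<Sum>p\<in>UNIV. g (fst p) (snd p))"
proof -
  have "(\<Sum>i\<in>UNIV. \<Sum>k\<in>UNIV. g i k) = (\<Sum>p\<in>UNIV \<times> UNIV. g (fst p) (snd p))"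
    unfolding sum.cartesian_product by (simp add: split_def)
  then show ?thesis by simp
qed

lemma cs:
  fixes f g :: "'a \<Rightarrow> complex"
  shows "(\<Sum>i\<in>I. Re (f i * cnj (g i)))\<^sup>2 \<le> (\<Sum>i\<in>I. (cmod (f i))\<^sup>2) * (\<Sum>i\<in>I. (cmod (g i))\<^sup>2)"
proof -
  have "\<bar>\<Sum>i\<in>I. Re (f i * cnj (g i))\<bar> \<le> (\<Sum>i\<in>I. \<bar>Re (f i * cnj (g i))\<bar>)"
    by (rule sum_abs)
  also have "\<dots> \<le> (\<Sum>i\<in>I. cmod (f i) * cmod (g i))"
    proof (rule sum_mono)
    fix i show "\<bar>Re (f i * cnj (g i))\<bar> \<le> cmod (f i) * cmod (g i)"
      using abs_Re_le_cmod[of "f i * cnj (g i)"] by (simp add: norm_mult)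
  qed
  finally have h: "\<bar>\<Sum>i\<in>I. Re (f i * cnj (g i))\<bar> \<le> (\<Sum>i\<in>I. cmod (f i) * cmod (g i))" .
  have "(\<Sum>i\<in>I. Re (f i * cnj (g i)))\<^sup>2 \<le> (\<Sum>i\<in>I. cmod (f i) * cmod (g i))\<^sup>2"
  proof -
    have S0: "0 \<le> (\<Sum>i\<in>I. cmod (f i) * cmod (g i))" by (simp add: sum_nonneg)
    show ?thesis using h S0 by (simp add: abs_le_square_iff[symmetric])
  qed
  also have "\<dots> \<le> (\<Sum>i\<in>I. (cmod (f i))\<^sup>2) * (\<Sum>i\<in>I. (cmod (g i))\<^sup>2)"
    by (rule Cauchy_Schwarz_ineq_sum)
  finally show ?thesis .
qed

lemma key:
  fixes a b c :: real
  assumes "0 \<le> a" "0 \<le> b" "a \<le> 1" "b \<le> 1" "max a b > 0" "c\<^sup>2 \<le> a * b"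
  shows "c / max a b \<le> c + sqrt (1 - a) * sqrt (1 - b)"
proof (cases "c \<le> 0")
  case True
  have m: "max a b \<le> 1" using assms by simp
  have mp: "0 < max a b" using assms by simp
  have "c * 1 \<le> c * max a b" using True m by (intro mult_left_mono_neg) auto
  then have "c / max a b \<le> c" using mp by (simp add: divide_le_eq)
  moreover have "0 \<le> sqrt (1 - a) * sqrt (1 - b)" using assms by simp
  ultimately show ?thesis by linarith
next
  case False
  define m where "m = max a b"
  have m0: "0 < m" "m \<le> 1" using assms by (auto simp: m_def)
  have ab: "a * b * (1 - m)\<^sup>2 \<le> m\<^sup>2 * ((1 - a) * (1 - b))"
  proof (cases "b \<le> a")
    case True
    then have "m = a" by (simp add: m_def)
    moreover have "a * (1 - a) * (b * (1 - a)) \<le> a * (1 - a) * (a * (1 - b))"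
      using True assms by (intro mult_left_mono) (auto simp: algebra_simps)
    ultimately show ?thesis by (simp add: power2_eq_square algebra_simps)
  next
    case False
    then have "m = b" by (simp add: m_def)
    moreover have "b * (1 - b) * (a * (1 - b)) \<le> b * (1 - b) * (b * (1 - a))"
      using False assms by (intro mult_left_mono) (auto simp: algebra_simps)
    ultimately show ?thesis by (simp add: power2_eq_square algebra_simps)
  qed
  have "(c * (1 - m) / m)\<^sup>2 = c\<^sup>2 * (1 - m)\<^sup>2 / m\<^sup>2" by (simp add: power_divide power_mult_distrib)
  also have "\<dots> \<le> a * b * (1 - m)\<^sup>2 / m\<^sup>2"
    using assms(6) m0 by (intro divide_right_mono mult_right_mono) auto
  also have "\<dots> \<le> (1 - a) * (1 - b)"
  proof -
    have "m\<^sup>2 > 0" using m0 by simp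
    then show ?thesis using ab by (subst divide_le_eq) (simp add: mult.commute)
  qed
  finally have "c * (1 - m) / m \<le> sqrt ((1 - a) * (1 - b))" by (rule real_le_rsqrt)
  moreover have "c / m = c + c * (1 - m) / m" using m0 by (simp add: field_simps)
  ultimately show ?thesis by (simp add: m_def real_sqrt_mult)
qed

theorem theorem1:
  fixes \<rho> \<sigma> :: "complex^'n^'n"
  assumes "hermitian_mat \<rho>" and "hermitian_mat \<sigma>"
    and "Re (trace (\<rho> ** \<rho>)) \<le> 1" and "Re (trace (\<sigma> ** \<sigma>)) \<le> 1"
    and "max (Re (trace (\<rho> ** \<rho>))) (Re (trace (\<sigma> ** \<sigma>))) > 0"
  shows "Re (trace (\<rho> ** \<sigma>)) / max (Re (trace (\<rho> ** \<rho>))) (Re (trace (\<sigma> ** \<sigma>)))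
         \<le> Re (trace (\<rho> ** \<sigma>))
            + sqrt (1 - Re (trace (\<rho> ** \<rho>))) * sqrt (1 - Re (trace (\<sigma> ** \<sigma>)))"
proof (rule key)
  have sq: "Re (z * cnj z) = (cmod z)\<^sup>2" for z :: complex
    by (metis Re_complex_of_real complex_norm_square of_real_power)
  let ?f = "\<lambda>p. \<rho> $ fst p $ snd p" and ?g = "\<lambda>p. \<sigma> $ fst p $ snd p"
  have c: "Re (trace (\<rho> ** \<sigma>)) = (\<Sum>p\<in>UNIV. Re (?f p * cnj (?g p)))"
    by (simp only: tr_eq[OF assms(2), of \<rho>] sum_pairs)
  have a: "Re (trace (\<rho> ** \<rho>)) = (\<Sum>p\<in>UNIV. (cmod (?f p))\<^sup>2)"
    by (simp only: tr_eq[OF assms(1), of \<rho>] sq sum_pairs)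
  have b: "Re (trace (\<sigma> ** \<sigma>)) = (\<Sum>p\<in>UNIV. (cmod (?g p))\<^sup>2)"
    by (simp only: tr_eq[OF assms(2), of \<sigma>] sq sum_pairs)
  show "0 \<le> Re (trace (\<rho> ** \<rho>))" unfolding a by (simp add: sum_nonneg)
  show "0 \<le> Re (trace (\<sigma> ** \<sigma>))" unfolding b by (simp add: sum_nonneg)
  show "(Re (trace (\<rho> ** \<sigma>)))\<^sup>2 \<le> Re (trace (\<rho> ** \<rho>)) * Re (trace (\<sigma> ** \<sigma>))"
    unfolding a b c by (rule cs)
  show "Re (trace (\<rho> ** \<rho>)) \<le> 1" by (rule assms(3))
  show "Re (trace (\<sigma> ** \<sigma>)) \<le> 1" by (rule assms(4))
  show "max (Re (trace (\<rho> ** \<rho>))) (Re (trace (\<sigma> ** \<sigma>))) > 0" by (rule assms(5))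
qed

end
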